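(* Consider the setting and framework in the context with $\alpha_k=\frac{H+1}{H+k}$. Let $w_t=\alpha_t/\alpha_t^1$ for $t\ge1$ and fix $\eta>0$. Let the policies be generated by weighted Hedge/FTRL: $\mu_h^1(\cdot|s)$, $\nu_h^1(\cdot|s)$ uniform, and for $k\ge2$, $$\mu_h^k(a|s)\propto\exp\Big(\frac{\eta}{w_{k-1}}\sum_{t=1}^{k-1}w_t\sum_b\nu_h^t(b|s)Q_h^t(s,a,b)\Big),\quad \nu_h^k(b|s)\propto\exp\Big(-\frac{\eta}{w_{k-1}}\sum_{t=1}^{k-1}w_t\sum_a\mu_h^t(a|s)Q_h^t(s,a,b)\Big).$$ Then for all $k\ge1$ and $h\in[H]$, $$\mathrm{reg}_h^k\le\frac{(H+1)\max\{\log A,\log B\}}{\eta k}+\frac{\eta H^2}{2},$$ and with weights $\beta_k^t=\alpha_k^t$, $\overline{\mathrm{reg}}_h^k\le 2\Big(\frac{(H+1)\max\{\log A,\log B\}}{\eta k}+\frac{\eta H^2}{2}\Big)$.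
   Context: Setting. A finite-horizon two-player zero-sum Markov game with finite state set $\mathcal S$, finite action sets $\mathcal A$ (max-player, $A=|\mathcal A|$) and $\mathcal B$ (min-player, $B=|\mathcal B|$), horizon $H\ge 1$, reward functions $r_h:\mathcal S\times\mathcal A\times\mathcal B\to[0,1]$ and transition kernels $\mathbb P_h(\cdot\mid s,a,b)$ on $\mathcal S$, $h\in[H]$. For $Q:\mathcal A\times\mathcal B\to\mathbb R$, $x\in\Delta_{\mathcal A}$, $y\in\Delta_{\mathcal B}$, write $\langle Q,x\times y\rangle=\sum_{a,b}x(a)y(b)Q(a,b)$. Framework. Given learning rates $\alpha_k\in(0,1]$ ($k\ge1$) with $\alpha_1=1$ and Markov policies $\mu_h^k(\cdot\mid s)\in\Delta_{\mathcal A}$, $\nu_h^k(\cdot\mid s)\in\Delta_{\mathcal B}$ ($k\ge1$, $h\in[H]$, $s\in\mathcal S$), define $Q_{H+1}^k\equiv 0$ for all $k$, $Q_h^0\equiv H-h+1$, and for $k\ge1$, $h=H,\dots,1$: $$Q_h^k(s,a,b)=(1-\alpha_k)Q_h^{k-1}(s,a,b)+\alpha_k\Big(r_h(s,a,b)+\sum_{s'}\mathbb P_h(s'\mid s,a,b)\langle Q_{h+1}^k(s',\cdot,\cdot),\mu_{h+1}^k(\cdot\mid s')\times\nu_{h+1}^k(\cdot\mid s')\rangle\Big)$$ (for $h=H$ the inner product term is $0$). Let $\alpha_k^t=\alpha_t\prod_{j=t+1}^k(1-\alpha_j)$ for $1\le t\le k$. Weighted regrets: for $h\in[H]$, $\mathrm{reg}_{h,\mu}^k(s)=\max_{z\in\Delta_{\mathcal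 A}}\sum_{t=1}^k\alpha_k^t\langle Q_h^t(s,\cdot,\cdot),z\times\nu_h^t(\cdot|s)\rangle-\sum_{t=1}^k\alpha_k^t\langle Q_h^t(s,\cdot,\cdot),\mu_h^t(\cdot|s)\times\nu_h^t(\cdot|s)\rangle$, $\mathrm{reg}_{h,\nu}^k(s)=\sum_{t=1}^k\alpha_k^t\langle Q_h^t(s,\cdot,\cdot),\mu_h^t(\cdot|s)\times\nu_h^t(\cdot|s)\rangle-\min_{z\in\Delta_{\mathcal B}}\sum_{t=1}^k\alpha_k^t\langle Q_h^t(s,\cdot,\cdot),\mu_h^t(\cdot|s)\times z\rangle$, $\mathrm{reg}_h^k=\max_{s}\max\{\mathrm{reg}_{h,\mu}^k(s),\mathrm{reg}_{h,\nu}^k(s)\}$. Given weights $\beta_k^t\ge0$ with $\sum_{t=1}^k\beta_k^t=1$, define $\overline{\mathrm{reg}}_{h,\mu}^k(s),\overline{\mathrm{reg}}_{h,\nu}^k(s)$ exactly as $\mathrm{reg}_{h,\mu}^k(s),\mathrm{reg}_{h,\nu}^k(s)$ but with $\alpha_k^t$ replaced by $\beta_k^t$, and $\overline{\mathrm{reg}}_h^k=\max_s\big(\overline{\mathrm{reg}}_{h,\mu}^k(s)+\overline{\mathrm{reg}}_{h,\nu}^k(s)\big)$. *)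

theory Defs
  imports Complex_Main
begin

definition lr :: "nat \<Rightarrow> nat \<Rightarrow> real" where
  "lr H k = (real H + 1) / (real H + real k)"

definition lrw :: "nat \<Rightarrow> nat \<Rightarrow> nat \<Rightarrow> real" where
  "lrw H k t = lr H t * (\<Prod>j\<in>{t+1..k}. (1 - lr H j))"

definition wgt :: "nat \<Rightarrow> nat \<Rightarrow> real" where
  "wgt H t = lr H t / lrw H t 1"

definition simplex :: "('x::finite \<Rightarrow> real) set" where
  "simplex = {z. (\<forall>x. 0 \<le> z x) \<and> sum z UNIV = 1}"

definition pay :: "('a::finite \<Rightarrow> 'b::finite \<Rightarrow> real) \<Rightarrow> ('a \<Rightarrow> real) \<Rightarrow> ('b \<Rightarrow> real) \<Rightarrow> real" where
  "pay Q x y = (\<Sum>a\<in>UNIV. \<Sum>b\<in>UNIV. x a * y b * Q a b)"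

definition regmu :: "(nat \<Rightarrow> nat \<Rightarrow> real) \<Rightarrow> (nat \<Rightarrow> nat \<Rightarrow> 's \<Rightarrow> 'a::finite \<Rightarrow> 'b::finite \<Rightarrow> real)
   \<Rightarrow> (nat \<Rightarrow> nat \<Rightarrow> 's \<Rightarrow> 'a \<Rightarrow> real) \<Rightarrow> (nat \<Rightarrow> nat \<Rightarrow> 's \<Rightarrow> 'b \<Rightarrow> real) \<Rightarrow> nat \<Rightarrow> nat \<Rightarrow> 's \<Rightarrow> real" where
  "regmu wt Q mu nu k h s =
     (SUP z\<in>simplex. (\<Sum>t=1..k. wt k t * pay (Q t h s) z (nu t h s)))
     - (\<Sum>t=1..k. wt k t * pay (Q t h s) (mu t h s) (nu t h s))"

definition regnu :: "(nat \<Rightarrow> nat \<Rightarrow> real) \<Rightarrow> (nat \<Rightarrow> nat \<Rightarrow> 's \<Rightarrow> 'a::finite \<Rightarrow> 'b::finite \<Rightarrow> real)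
   \<Rightarrow> (nat \<Rightarrow> nat \<Rightarrow> 's \<Rightarrow> 'a \<Rightarrow> real) \<Rightarrow> (nat \<Rightarrow> nat \<Rightarrow> 's \<Rightarrow> 'b \<Rightarrow> real) \<Rightarrow> nat \<Rightarrow> nat \<Rightarrow> 's \<Rightarrow> real" where
  "regnu wt Q mu nu k h s =
     (\<Sum>t=1..k. wt k t * pay (Q t h s) (mu t h s) (nu t h s))
     - (INF z\<in>simplex. (\<Sum>t=1..k. wt k t * pay (Q t h s) (mu t h s) z))"

definition reg :: "(nat \<Rightarrow> nat \<Rightarrow> real) \<Rightarrow> (nat \<Rightarrow> nat \<Rightarrow> 's::finite \<Rightarrow> 'a::finite \<Rightarrow> 'b::finite \<Rightarrow> real)
   \<Rightarrow> (nat \<Rightarrow> nat \<Rightarrow> 's \<Rightarrow> 'a \<Rightarrow> real) \<Rightarrow> (nat \<Rightarrow> nat \<Rightarrow> 's \<Rightarrow> 'b \<Rightarrow> real) \<Rightarrow> nat \<Rightarrow> nat \<Rightarrow> real" where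
  "reg wt Q mu nu k h = Max (range (\<lambda>s. max (regmu wt Q mu nu k h s) (regnu wt Q mu nu k h s)))"

definition regbar :: "(nat \<Rightarrow> nat \<Rightarrow> real) \<Rightarrow> (nat \<Rightarrow> nat \<Rightarrow> 's::finite \<Rightarrow> 'a::finite \<Rightarrow> 'b::finite \<Rightarrow> real)
   \<Rightarrow> (nat \<Rightarrow> nat \<Rightarrow> 's \<Rightarrow> 'a \<Rightarrow> real) \<Rightarrow> (nat \<Rightarrow> nat \<Rightarrow> 's \<Rightarrow> 'b \<Rightarrow> real) \<Rightarrow> nat \<Rightarrow> nat \<Rightarrow> real" where
  "regbar beta Q mu nu k h = Max (range (\<lambda>s. regmu beta Q mu nu k h s + regnu beta Q mu nu k h s))"

definition logit_mu :: "nat \<Rightarrow> real \<Rightarrow> (nat \<Rightarrow> nat \<Rightarrow> 's \<Rightarrow> 'a \<Rightarrow> 'b::finite \<Rightarrow> real)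
   \<Rightarrow> (nat \<Rightarrow> nat \<Rightarrow> 's \<Rightarrow> 'b \<Rightarrow> real) \<Rightarrow> nat \<Rightarrow> nat \<Rightarrow> 's \<Rightarrow> 'a \<Rightarrow> real" where
  "logit_mu H eta Q nu k h s a =
     eta / wgt H (k-1) * (\<Sum>t=1..k-1. wgt H t * (\<Sum>b\<in>UNIV. nu t h s b * Q t h s a b))"

definition logit_nu :: "nat \<Rightarrow> real \<Rightarrow> (nat \<Rightarrow> nat \<Rightarrow> 's \<Rightarrow> 'a::finite \<Rightarrow> 'b \<Rightarrow> real)
   \<Rightarrow> (nat \<Rightarrow> nat \<Rightarrow> 's \<Rightarrow> 'a \<Rightarrow> real) \<Rightarrow> nat \<Rightarrow> nat \<Rightarrow> 's \<Rightarrow> 'b \<Rightarrow> real" where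
  "logit_nu H eta Q mu k h s b =
     - eta / wgt H (k-1) * (\<Sum>t=1..k-1. wgt H t * (\<Sum>a\<in>UNIV. mu t h s a * Q t h s a b))"

end

theory Submission
  imports Defs "HOL-Probability.Hoeffding"
begin

lemma hoeff_fin:
  fixes p g :: "'x \<Rightarrow> real"
  assumes fin: "finite S" and p0: "\<And>x. x \<in> S \<Longrightarrow> p x \<ge> 0" and p1: "sum p S = 1"
    and gb: "\<And>x. x \<in> S \<Longrightarrow> a \<le> g x \<and> g x \<le> b" and ab: "a < b" and l: "l \<ge> 0"
  shows "ln (\<Sum>x\<in>S. p x * exp (l * g x)) \<le> l * (\<Sum>x\<in>S. p x * g x) + l^2 * (b-a)^2 / 8"
proof -
  define m where "m = (\<Sum>x\<in>S. p x * g x)"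
  have ma: "a \<le> m"
  proof -
    have "(\<Sum>x\<in>S. p x * a) \<le> m" unfolding m_def
      by (intro sum_mono mult_left_mono) (use gb p0 in auto)
    thus ?thesis by (simp add: sum_distrib_right[symmetric] p1)
  qed
  have mb: "m \<le> b"
  proof -
    have "m \<le> (\<Sum>x\<in>S. p x * b)" unfolding m_def
      by (intro sum_mono mult_left_mono) (use gb p0 in auto)
    thus ?thesis by (simp add: sum_distrib_right[symmetric] p1)
  qed
  define a' where "a' = a - m"
  define b' where "b' = b - m"
  have ba: "b' - a' = b - a" by (simp add: a'_def b'_def)
  have pt: "exp (l * (g x - m)) \<le> (b' - (g x - m)) / (b - a) * exp (l * a') + ((g x - m) - a') / (b - a) * exp (l * b')"
    if x: "x \<in> S" for x
  proof -
    define y where "y = (b' - (g x - m)) / (b-a)"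
    have y: "y \<in> {0..1}"
      using gb[OF x] ab by (auto simp: y_def b'_def)
    have "exp (l * ((1 - y) *\<^sub>R b' + y *\<^sub>R a')) \<le> (1 - y) * exp (l * b') + y * exp (l * a')"
      using y l by (intro convex_onD[OF convex_on_exp]) auto
    also have "(1 - y) *\<^sub>R b' + y *\<^sub>R a' = g x - m"
    proof -
      have "y * (b - a) = b' - (g x - m)" using ab by (simp add: y_def)
      moreover have "(1 - y) *\<^sub>R b' + y *\<^sub>R a' = b' - y * (b' - a')" by (simp add: algebra_simps)
      ultimately show ?thesis by (simp add: ba)
    qed
    also have "1 - y = ((g x - m) - a') / (b - a)"
      using ab by (simp add: field_simps y_def a'_def b'_def)
    finally show ?thesis by (simp add: y_def)
  qed
  have "(\<Sum>x\<in>S. p x * exp (l * (g x - m))) \<le>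
        (\<Sum>x\<in>S. p x * ((b' - (g x - m)) / (b - a) * exp (l * a') + ((g x - m) - a') / (b - a) * exp (l * b')))"
    by (intro sum_mono mult_left_mono pt p0)
  also have "\<dots> = (b' * exp (l * a') - a' * exp (l * b')) / (b - a)"
  proof -
    have e: "(\<Sum>x\<in>S. p x * (g x - m)) = 0"
      by (simp add: right_diff_distrib sum_subtractf sum_distrib_right[symmetric] p1 m_def)
    have "(\<Sum>x\<in>S. p x * ((b' - (g x - m)) / (b - a) * exp (l * a') + ((g x - m) - a') / (b - a) * exp (l * b')))
       = (\<Sum>x\<in>S. p x * (b' * exp (l * a') - a' * exp (l * b')) / (b - a)
             + (p x * (g x - m)) * ((exp (l * b') - exp (l * a')) / (b - a)))"
      using ab by (intro sum.cong refl) (simp add: divide_simps, simp add: algebra_simps)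
    also have "\<dots> = (b' * exp (l * a') - a' * exp (l * b')) / (b - a)"
      by (simp add: sum.distrib sum_divide_distrib[symmetric] sum_distrib_right[symmetric] p1 e)
    finally show ?thesis .
  qed
  also have "\<dots> = exp (l^2 * (b-a)^2/8) * 0 + exp (- (l*(b-a)) * (-a'/(b-a)) + ln (1 + (-a'/(b-a)) * (exp (l*(b-a)) - 1)))"
  proof -
    define q where "q = -a'/(b-a)"
    have q0: "q \<ge> 0" using ma ab by (simp add: q_def a'_def)
    have q1: "q \<le> 1" using mb ab by (simp add: q_def a'_def field_simps)
    have pos: "1 + q * (exp (l*(b-a)) - 1) > 0"
    proof -
      have "exp (l*(b-a)) \<ge> 1" using l ab by simp
      hence "q * (exp (l*(b-a)) - 1) \<ge> 0" using q0 by simp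
      thus ?thesis by simp
    qed
    have "exp (- (l*(b-a)) * q + ln (1 + q * (exp (l*(b-a)) - 1)))
          = exp (l * a') * (1 + q * (exp (l*(b-a)) - 1))"
    proof -
      have "- (l*(b-a)) * q = l * a'" using ab by (simp add: q_def)
      thus ?thesis using pos by (simp add: exp_add)
    qed
    also have "\<dots> = (b' * exp (l * a') - a' * exp (l * b')) / (b - a)"
      using ab unfolding q_def
      by (simp add: field_simps b'_def a'_def exp_add[symmetric] exp_diff) (simp add: algebra_simps)?
    finally show ?thesis by (simp add: q_def)
  qed
  also have "\<dots> \<le> exp (l^2 * (b-a)^2/8)"
  proof -
    have "- (l*(b-a)) * (-a'/(b-a)) + ln (1 + (-a'/(b-a)) * (exp (l*(b-a)) - 1)) \<le> (l*(b-a))^2/8"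
      by (rule Hoeffdings_lemma_aux) (use ab l ma in \<open>auto simp: a'_def\<close>)
    thus ?thesis by (simp add: power_mult_distrib)
  qed
  finally have 1: "(\<Sum>x\<in>S. p x * exp (l * (g x - m))) \<le> exp (l^2 * (b-a)^2/8)" .
  have 2: "(\<Sum>x\<in>S. p x * exp (l * g x)) = exp (l * m) * (\<Sum>x\<in>S. p x * exp (l * (g x - m)))"
    by (simp add: sum_distrib_left right_diff_distrib exp_diff field_simps)
  have pos2: "(\<Sum>x\<in>S. p x * exp (l * (g x - m))) > 0"
  proof -
    have "(\<Sum>x\<in>S. p x * exp (l * (g x - m))) \<ge> (\<Sum>x\<in>S. p x * exp (l * (a - m)))"
      by (intro sum_mono mult_left_mono) (use gb p0 l in \<open>auto intro!: mult_left_mono\<close>)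
    also have "(\<Sum>x\<in>S. p x * exp (l * (a - m))) = exp (l * (a - m))"
      by (simp add: sum_distrib_right[symmetric] p1)
    finally show ?thesis by (smt (verit) exp_gt_zero)
  qed
  have "ln (\<Sum>x\<in>S. p x * exp (l * g x)) = l * m + ln (\<Sum>x\<in>S. p x * exp (l * (g x - m)))"
    using pos2 by (simp add: 2 ln_mult)
  also have "\<dots> \<le> l * m + l^2 * (b-a)^2/8"
  proof -
    have "ln (\<Sum>x\<in>S. p x * exp (l * (g x - m))) \<le> ln (exp (l^2 * (b-a)^2/8))"
      using 1 pos2 by (subst ln_le_cancel_iff) auto
    thus ?thesis by simp
  qed
  finally show ?thesis by (simp add: m_def)
qed

lemma lse_mono:
  fixes G :: "'x \<Rightarrow> real"
  assumes fin: "finite S" and ne: "S \<noteq> {}" and l': "0 < l'" and ll: "l' \<le> l"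
  shows "ln (\<Sum>x\<in>S. exp (l' * G x)) / l' \<le> ln (\<Sum>x\<in>S. exp (l * G x)) / l + (1/l' - 1/l) * ln (real (card S))"
proof -
  define r where "r = l' / l"
  have l: "0 < l" using l' ll by simp
  have r0: "0 < r" "r \<le> 1" using l' ll l by (auto simp: r_def)
  define Y where "Y = (\<Sum>x\<in>S. exp (l * G x))"
  define N where "N = real (card S)"
  have N: "N > 0" using fin ne by (simp add: N_def card_gt_0_iff)
  have Y: "Y > 0" unfolding Y_def using fin ne by (intro sum_pos) auto
  define c where "c = ln (Y / N)"
  have ec: "exp c = Y / N" using Y N by (simp add: c_def)
  have pt: "exp (l' * G x) * exp (- (r * c)) \<le> r * (exp (l * G x) / exp c) + (1 - r)" for x
  proof -
    have "exp (1 * ((1 - r) *\<^sub>R 0 + r *\<^sub>R (l * G x - c))) \<le> (1 - r) * exp (1 * 0) + r * exp (1 * (l * G x - c))"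
      using r0 by (intro convex_onD[OF convex_on_exp]) auto
    hence a: "exp (r * (l * G x - c)) \<le> (1 - r) + r * exp (l * G x - c)" by simp
    have "l' * G x - r * c = r * (l * G x - c)" using l by (simp add: r_def field_simps)
    hence "exp (l' * G x) * exp (- (r * c)) = exp (r * (l * G x - c))"
      by (metis exp_add uminus_add_conv_diff add.commute diff_conv_add_uminus)
    also have "\<dots> \<le> (1 - r) + r * (exp (l * G x) / exp c)" using a by (simp add: exp_diff)
    finally show ?thesis by simp
  qed
  have "(\<Sum>x\<in>S. exp (l' * G x)) * exp (- (r * c)) \<le> (\<Sum>x\<in>S. r * (exp (l * G x) / exp c) + (1 - r))"
    unfolding sum_distrib_right by (intro sum_mono pt)
  also have "\<dots> = r * (Y / exp c) + (1 - r) * N"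
    by (simp add: sum.distrib sum_distrib_left[symmetric] sum_divide_distrib[symmetric] Y_def N_def)
  also have "\<dots> = N" using Y N by (simp add: ec algebra_simps)
  finally have 1: "(\<Sum>x\<in>S. exp (l' * G x)) \<le> N * exp (r * c)"
    by (simp add: exp_minus field_simps)
  have pos: "(\<Sum>x\<in>S. exp (l' * G x)) > 0" using fin ne by (intro sum_pos) auto
  have "ln (\<Sum>x\<in>S. exp (l' * G x)) \<le> ln (N * exp (r * c))"
    using 1 pos N by (subst ln_le_cancel_iff) auto
  also have "\<dots> = ln N + r * (ln Y - ln N)" using N Y by (simp add: ln_mult c_def ln_div)
  finally have 2: "ln (\<Sum>x\<in>S. exp (l' * G x)) \<le> ln N + r * (ln Y - ln N)" .
  have "ln (\<Sum>x\<in>S. exp (l' * G x)) / l' \<le> (ln N + r * (ln Y - ln N)) / l'"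
    using 2 l' by (simp add: divide_right_mono)
  also have "\<dots> = ln Y / l + (1/l' - 1/l) * ln N"
    using l l' by (simp add: r_def field_simps)
  finally show ?thesis by (simp add: Y_def N_def)
qed

lemma hedge:
  fixes g :: "nat \<Rightarrow> 'x::finite \<Rightarrow> real" and w lo :: "nat \<Rightarrow> real" and p :: "nat \<Rightarrow> 'x \<Rightarrow> real"
  assumes wpos: "\<And>t. w t > 0" and wmono: "\<And>t. w t \<le> w (Suc t)" and eta: "eta > 0" and R: "R > 0"
    and gb: "\<And>t x. t \<ge> 1 \<Longrightarrow> lo t \<le> g t x \<and> g t x \<le> lo t + R"
    and pdef: "\<And>t x. t \<ge> 1 \<Longrightarrow> p t x = exp (eta / w (t-1) * (\<Sum>j=1..t-1. w j * g j x))
                   / (\<Sum>x'\<in>UNIV. exp (eta / w (t-1) * (\<Sum>j=1..t-1. w j * g j x')))"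
  shows "(\<Sum>t=1..k. w t * g t x0) - (\<Sum>t=1..k. w t * (\<Sum>x\<in>UNIV. p t x * g t x))
           \<le> ln (real CARD('x)) * w k / eta + eta * R^2 / 8 * (\<Sum>t=1..k. (w t)^2 / w (t-1))"
proof -
  define G where "G k x = (\<Sum>j=1..k. w j * g j x)" for k x
  define N where "N = real CARD('x)"
  define Phi where "Phi lam k = ln (\<Sum>x\<in>UNIV. exp (lam * G k x)) / lam" for lam k
  define B where "B k = ln N * w k / eta + (\<Sum>t=1..k. w t * (\<Sum>x\<in>UNIV. p t x * g t x))
                        + eta * R^2 / 8 * (\<Sum>t=1..k. (w t)^2 / w (t-1))" for k
  have inv: "Phi (eta / w k) k \<le> B k" for k
  proof (induction k)
    case 0
    have "G 0 = (\<lambda>x. 0)" by (auto simp: G_def fun_eq_iff)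
    thus ?case by (simp add: Phi_def B_def N_def)
  next
    case (Suc k)
    define lam where "lam = eta / w k"
    define lam' where "lam' = eta / w (Suc k)"
    have lam: "lam > 0" using eta wpos by (simp add: lam_def)
    have lam': "lam' > 0" using eta wpos by (simp add: lam'_def)
    have ll: "lam' \<le> lam" unfolding lam_def lam'_def
      using wpos wmono eta by (simp add: frac_le)
    have a: "Phi lam' (Suc k) \<le> Phi lam (Suc k) + (1/lam' - 1/lam) * ln N"
      unfolding Phi_def N_def using lse_mono[OF _ _ lam' ll, of UNIV "G (Suc k)"] by simp
    define Z where "Z = (\<Sum>x\<in>UNIV. exp (lam * G k x))"
    have Z: "Z > 0" unfolding Z_def by (intro sum_pos) auto
    have pk: "p (Suc k) x = exp (lam * G k x) / Z" for x
      using pdef[of "Suc k" x] by (simp add: lam_def G_def Z_def)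
    define l where "l = lam * w (Suc k)"
    have l: "l \<ge> 0" using lam wpos[of "Suc k"] by (simp add: l_def)
    have p0: "p (Suc k) x \<ge> 0" for x using Z by (simp add: pk)
    have p1: "sum (p (Suc k)) UNIV = 1" using Z by (simp add: pk sum_divide_distrib[symmetric] Z_def[symmetric])
    have GS: "G (Suc k) x = G k x + w (Suc k) * g (Suc k) x" for x by (simp add: G_def)
    have e: "(\<Sum>x\<in>UNIV. exp (lam * G (Suc k) x)) = Z * (\<Sum>x\<in>UNIV. p (Suc k) x * exp (l * g (Suc k) x))"
    proof -
      have "exp (lam * G (Suc k) x) = Z * (p (Suc k) x * exp (l * g (Suc k) x))" for x
      proof -
        have "lam * G (Suc k) x = lam * G k x + l * g (Suc k) x" by (simp add: GS l_def algebra_simps)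
        hence "exp (lam * G (Suc k) x) = exp (lam * G k x) * exp (l * g (Suc k) x)" by (simp add: exp_add)
        thus ?thesis using Z by (simp add: pk)
      qed
      thus ?thesis by (simp add: sum_distrib_left)
    qed
    have S: "(\<Sum>x\<in>UNIV. p (Suc k) x * exp (l * g (Suc k) x)) > 0"
    proof -
      have "(\<Sum>x\<in>UNIV. p (Suc k) x * exp (l * lo (Suc k))) \<le> (\<Sum>x\<in>UNIV. p (Suc k) x * exp (l * g (Suc k) x))"
        using gb[of "Suc k"] l p0 by (intro sum_mono mult_left_mono) (auto intro: mult_left_mono)
      moreover have "(\<Sum>x\<in>UNIV. p (Suc k) x * exp (l * lo (Suc k))) = exp (l * lo (Suc k))" by (simp add: sum_distrib_right[symmetric] p1)
      ultimately show ?thesis by (smt (verit) exp_gt_zero)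
    qed
    have h: "ln (\<Sum>x\<in>UNIV. p (Suc k) x * exp (l * g (Suc k) x)) \<le>
             l * (\<Sum>x\<in>UNIV. p (Suc k) x * g (Suc k) x) + l^2 * ((lo (Suc k) + R) - lo (Suc k))^2 / 8"
      by (rule hoeff_fin[OF _ p0 p1 _ _ l]) (use gb[of "Suc k"] R in auto)
    have "Phi lam (Suc k) = (ln Z + ln (\<Sum>x\<in>UNIV. p (Suc k) x * exp (l * g (Suc k) x))) / lam"
      unfolding Phi_def e using Z S by (simp add: ln_mult)
    also have "\<dots> \<le> (ln Z + (l * (\<Sum>x\<in>UNIV. p (Suc k) x * g (Suc k) x) + l^2 * R^2 / 8)) / lam"
      using h lam by (intro divide_right_mono) auto
    also have "\<dots> = Phi lam k + w (Suc k) * (\<Sum>x\<in>UNIV. p (Suc k) x * g (Suc k) x) + eta * R^2 / 8 * ((w (Suc k))^2 / w k)"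
    proof -
      have "(ln Z + (l * (\<Sum>x\<in>UNIV. p (Suc k) x * g (Suc k) x) + l^2 * R^2 / 8)) / lam
          = ln Z / lam + (l / lam) * (\<Sum>x\<in>UNIV. p (Suc k) x * g (Suc k) x) + (l^2 / lam) * R^2 / 8"
        by (simp add: add_divide_distrib)
      moreover have "l / lam = w (Suc k)" using lam by (simp add: l_def)
      moreover have "l^2 / lam = eta * ((w (Suc k))^2 / w k)"
        using lam by (simp add: l_def lam_def power2_eq_square)
      ultimately show ?thesis unfolding Phi_def Z_def using wpos[of k] by simp (simp add: field_simps)
    qed
    finally have b: "Phi lam (Suc k) \<le> Phi lam k + w (Suc k) * (\<Sum>x\<in>UNIV. p (Suc k) x * g (Suc k) x) + eta * R^2 / 8 * ((w (Suc k))^2 / w k)" .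
    have c: "(1/lam' - 1/lam) * ln N = ln N * w (Suc k) / eta - ln N * w k / eta"
      using eta by (simp add: lam_def lam'_def field_simps)
    have "Phi lam' (Suc k) \<le> B k + w (Suc k) * (\<Sum>x\<in>UNIV. p (Suc k) x * g (Suc k) x) + eta * R^2 / 8 * ((w (Suc k))^2 / w k)
           + (ln N * w (Suc k) / eta - ln N * w k / eta)"
      using a b c Suc.IH unfolding lam_def[symmetric] by linarith
    also have "\<dots> = B (Suc k)"
    proof -
      have s1: "(\<Sum>t=1..Suc k. w t * (\<Sum>x\<in>UNIV. p t x * g t x)) = (\<Sum>t=1..k. w t * (\<Sum>x\<in>UNIV. p t x * g t x)) + w (Suc k) * (\<Sum>x\<in>UNIV. p (Suc k) x * g (Suc k) x)"
        by simp
      have s2: "(\<Sum>t=1..Suc k. (w t)^2 / w (t-1)) = (\<Sum>t=1..k. (w t)^2 / w (t-1)) + (w (Suc k))^2 / w k"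
        by simp
      have d: "eta * R^2 / 8 * ((\<Sum>t=1..k. (w t)^2 / w (t-1)) + (w (Suc k))^2 / w k)
         = eta * R^2 / 8 * (\<Sum>t=1..k. (w t)^2 / w (t-1)) + eta * R^2 / 8 * ((w (Suc k))^2 / w k)"
        by (rule distrib_left)
      show ?thesis unfolding B_def s1 s2 d by linarith
    qed
    finally show ?case by (simp add: lam'_def)
  qed
  have lam: "eta / w k > 0" using eta wpos by simp
  have e: "exp (eta / w k * G k x0) \<le> (\<Sum>x\<in>UNIV. exp (eta / w k * G k x))"
    by (rule member_le_sum) simp_all
  have pos: "(\<Sum>x\<in>UNIV. exp (eta / w k * G k x)) > 0" by (intro sum_pos) auto
  have h: "eta / w k * G k x0 \<le> ln (\<Sum>x\<in>UNIV. exp (eta / w k * G k x))"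
    using e pos by (simp only: ln_ge_iff)
  have "G k x0 \<le> Phi (eta / w k) k" unfolding Phi_def using lam h by (metis pos_le_divide_eq mult.commute)
  with inv[of k] have "G k x0 \<le> B k" by linarith
  thus ?thesis unfolding B_def G_def N_def by linarith
qed

context fixes H :: nat assumes H: "H \<ge> 1" begin

lemma lr_pos: "lr H k > 0" using H by (simp add: lr_def add_pos_nonneg)
lemma lr_1[simp]: "lr H (Suc 0) = 1" using H by (simp add: lr_def)
lemma lr_le1: "k \<ge> 1 \<Longrightarrow> lr H k \<le> 1" using H by (simp add: lr_def)
lemma one_minus_lr: "k \<ge> 1 \<Longrightarrow> 1 - lr H k = (real k - 1) / (real H + real k)"
  using H by (simp add: lr_def field_simps)
lemma one_minus_lr_pos: "k \<ge> 2 \<Longrightarrow> 1 - lr H k > 0"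
  using one_minus_lr[of k] H by simp

lemma lrw1_eq: "lrw H t 1 = (\<Prod>j\<in>{2..t}. (1 - lr H j))"
  by (simp add: lrw_def numeral_2_eq_2)

lemma lrw1_pos: "lrw H t 1 > 0"
  unfolding lrw1_eq by (intro prod_pos) (use one_minus_lr_pos in auto)

lemma lrw_Suc: "t \<le> k \<Longrightarrow> lrw H (Suc k) t = (1 - lr H (Suc k)) * lrw H k t"
  by (simp add: lrw_def prod.cl_ivl_Suc)

lemma lrw_diag: "lrw H k k = lr H k" by (simp add: lrw_def)

lemma wgt_pos: "wgt H t > 0" unfolding wgt_def using lr_pos lrw1_pos by simp

lemma wgt_1: "wgt H 1 = 1" unfolding wgt_def lrw_def by simp

lemma wgt_ratio: "t \<ge> 1 \<Longrightarrow> wgt H (Suc t) = wgt H t * ((real H + real t) / real t)"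
proof -
  assume t: "t \<ge> 1"
  have e: "lrw H (Suc t) 1 = lrw H t 1 * (1 - lr H (Suc t))"
    using lrw_Suc[of 1 t] t by simp
  have p: "lrw H t 1 > 0" by (rule lrw1_pos)
  have q: "1 - lr H (Suc t) = real t / (real H + real t + 1)"
    using one_minus_lr[of "Suc t"] by simp
  have t0: "real t > 0" using t by simp
  have a: "wgt H (Suc t) = (real H + 1) / (lrw H t 1 * real t)"
    unfolding wgt_def e q using p t0 by (simp add: lr_def divide_simps)
  have b: "wgt H t = (real H + 1) / (lrw H t 1 * (real H + real t))"
    unfolding wgt_def using p t0 by (simp add: lr_def divide_simps)
  show ?thesis unfolding a b using p t0 by (simp add: divide_simps)
qed

definition w' :: "nat \<Rightarrow> real" where "w' t = (if t = 0 then 1 else wgt H t)"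

lemma w'_pos: "w' t > 0" by (simp add: w'_def wgt_pos)

lemma w'_mono: "w' t \<le> w' (Suc t)"
proof (cases "t = 0")
  case True thus ?thesis by (simp add: w'_def wgt_1[simplified])
next
  case False
  hence t: "t \<ge> 1" by simp
  have "1 \<le> (real H + real t) / real t" using t by simp
  hence "wgt H t * 1 \<le> wgt H t * ((real H + real t) / real t)"
    using wgt_pos[of t] by (intro mult_left_mono) auto
  thus ?thesis using wgt_ratio[OF t] False by (simp add: w'_def)
qed

lemma lrw_wgt:
  assumes t1: "1 \<le> t" and tk: "t \<le> k" shows "lrw H k t = lrw H k 1 * wgt H t"
  using tk
proof (induction k rule: dec_induct)
  case base
  show ?case using lrw1_pos[of t] by (simp add: wgt_def lrw_diag)
next
  case (step k)
  have "1 \<le> k" using step.hyps t1 by simp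
  thus ?case using step lrw_Suc[of t k] lrw_Suc[of 1 k] by simp
qed

lemma lrw_sum: assumes "k \<ge> 1" shows "(\<Sum>t=1..k. lrw H k t) = 1"
  using assms
proof (induction k rule: dec_induct)
  case base thus ?case by (simp add: lrw_diag)
next
  case (step k)
  have "(\<Sum>t=1..Suc k. lrw H (Suc k) t) = (\<Sum>t=1..k. lrw H (Suc k) t) + lr H (Suc k)"
    by (simp add: lrw_diag)
  also have "(\<Sum>t=1..k. lrw H (Suc k) t) = (1 - lr H (Suc k)) * (\<Sum>t=1..k. lrw H k t)"
    by (simp add: sum_distrib_left lrw_Suc)
  finally show ?case using step by simp
qed

lemma lrw_nonneg: "1 \<le> t \<Longrightarrow> t \<le> k \<Longrightarrow> lrw H k t \<ge> 0"
  using lrw_wgt[of t k] lrw1_pos[of k] wgt_pos[of t] by simp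

definition rho :: "nat \<Rightarrow> real" where "rho t = w' t / w' (t-1)"

lemma rho_1: "rho 1 = 1" by (simp add: rho_def w'_def wgt_1[simplified])
lemma rho_Suc: "t \<ge> 1 \<Longrightarrow> rho (Suc t) = (real H + real t) / real t"
  using wgt_ratio[of t] wgt_pos[of t] by (simp add: rho_def w'_def)

lemma poly_ineq:
  fixes x k :: real assumes x: "x \<ge> 1" and k: "k \<ge> 1"
  shows "k / (x + k) * (1 + 2 * x / k) + x / (x + k) * ((x + k - 1) / k) \<le> 1 + 2 * x / (k + 1)"
proof -
  have k0: "k \<noteq> 0" and xk: "x + k \<noteq> 0" and k1: "k + 1 \<noteq> 0" using x k by auto
  have A: "k / (x + k) * (1 + 2 * x / k) = (k + 2*x) / (x + k)"
  proof -
    have "k * (1 + 2 * x / k) = k + 2*x" using k0 by (simp add: distrib_left)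
    thus ?thesis by (metis times_divide_eq_left mult.commute)
  qed
  have B: "x / (x + k) * ((x + k - 1) / k) = (x*(x+k-1)) / ((x+k)*k)" by simp
  have C: "(k + 2*x) / (x + k) = ((k + 2*x)*k) / ((x+k)*k)" using k0 by simp
  have D: "1 + 2 * x / (k + 1) = (k + 1 + 2*x) / (k+1)" using k1 by (simp add: field_simps)
  have pD1: "(x+k)*k > 0" and pD2: "k + 1 > 0" using x k by auto
  have E: "((k + 2*x)*k + x*(x+k-1)) * (k+1) \<le> (k + 1 + 2*x) * ((x+k)*k)"
  proof -
    have "(k + 1 + 2*x) * ((x+k)*k) - ((k + 2*x)*k + x*(x+k-1)) * (k+1) = x*(x-1)*(k-1)"
      by (simp add: algebra_simps)
    moreover have "x*(x-1)*(k-1) \<ge> 0" using x k by simp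
    ultimately show ?thesis by linarith
  qed
  have "((k + 2*x)*k + x*(x+k-1)) / ((x+k)*k) \<le> (k + 1 + 2*x) / (k+1)"
    using E pD1 pD2 by (simp add: pos_divide_le_eq pos_le_divide_eq mult.commute mult.left_commute)
  thus ?thesis unfolding A B C D by (simp add: add_divide_distrib)
qed

lemma S_bound: assumes "k \<ge> 1" shows "(\<Sum>t=1..k. lrw H k t * rho t) \<le> 1 + 2 * (real H + 1) / real k"
  using assms
proof (induction k rule: dec_induct)
  case base thus ?case using H by (simp add: lrw_diag rho_1[simplified])
next
  case (step k)
  have k: "k \<ge> 1" using step.hyps by simp
  have "(\<Sum>t=1..Suc k. lrw H (Suc k) t * rho t) = (1 - lr H (Suc k)) * (\<Sum>t=1..k. lrw H k t * rho t) + lr H (Suc k) * rho (Suc k)"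
    by (simp add: lrw_diag sum_distrib_left lrw_Suc mult.assoc)
  also have "\<dots> \<le> (1 - lr H (Suc k)) * (1 + 2 * (real H + 1) / real k) + lr H (Suc k) * rho (Suc k)"
    using step.IH lr_le1[of "Suc k"] by (intro add_right_mono mult_left_mono) auto
  also have "\<dots> = real k / ((real H + 1) + real k) * (1 + 2 * (real H + 1) / real k)
       + (real H + 1) / ((real H + 1) + real k) * (((real H + 1) + real k - 1) / real k)"
  proof -
    have "1 - lr H (Suc k) = real k / ((real H + 1) + real k)"
      using one_minus_lr[of "Suc k"] by simp
    moreover have "lr H (Suc k) = (real H + 1) / ((real H + 1) + real k)"
      by (simp add: lr_def)
    moreover have "rho (Suc k) = ((real H + 1) + real k - 1) / real k"
      using rho_Suc[OF k] by simp
    ultimately show ?thesis by simp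
  qed
  also have "\<dots> \<le> 1 + 2 * (real H + 1) / (real k + 1)"
    by (rule poly_ineq) (use k in auto)
  finally show ?case by (simp add: add.commute)
qed

end

lemma ln2_third: "1/3 \<le> ln (2::real)"
proof -
  have "ln (1/2::real) \<le> 1/2 - 1" by (rule ln_le_minus_one) simp
  thus ?thesis by (simp add: ln_div)
qed

lemma amgm_aux:
  fixes a e h :: real assumes e: "e > 0" and a: "a \<ge> 1/2"
  shows "h \<le> a / e + e * h^2 / 2"
proof -
  have "0 \<le> (1 - e * h)^2" by simp
  hence "2 * e * h \<le> 1 + (e*h)^2" by (simp add: power2_eq_square algebra_simps)
  hence "h \<le> 1/(2*e) + e * h^2 / 2" using e by (simp add: field_simps power2_eq_square)
  moreover have "1/(2*e) \<le> a / e" using e a by (simp add: field_simps)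
  ultimately show ?thesis by linarith
qed

lemma player_bound:
  fixes H :: nat and g :: "nat \<Rightarrow> 'x::finite \<Rightarrow> real" and p :: "nat \<Rightarrow> 'x \<Rightarrow> real"
    and z :: "'x \<Rightarrow> real" and lo :: "nat \<Rightarrow> real"
  assumes H: "H \<ge> 1" and eta: "eta > 0" and k: "k \<ge> 1"
    and gb: "\<And>t x. t \<ge> 1 \<Longrightarrow> lo t \<le> g t x \<and> g t x \<le> lo t + real H"
    and pdef: "\<And>t x. t \<ge> 1 \<Longrightarrow> p t x = exp (eta / wgt H (t-1) * (\<Sum>j=1..t-1. wgt H j * g j x))
                   / (\<Sum>x'\<in>UNIV. exp (eta / wgt H (t-1) * (\<Sum>j=1..t-1. wgt H j * g j x')))"
    and z: "z \<in> Defs.simplex" and L: "ln (real CARD('x)) \<le> L"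
  shows "(\<Sum>t=1..k. lrw H k t * (\<Sum>x\<in>UNIV. z x * g t x)) - (\<Sum>t=1..k. lrw H k t * (\<Sum>x\<in>UNIV. p t x * g t x))
          \<le> (real H + 1) * L / (eta * real k) + eta * (real H)^2 / 2"
proof -
  define w where "w = w' H"
  have z0: "\<And>x. z x \<ge> 0" and z1: "sum z UNIV = 1" using z by (auto simp: Defs.simplex_def)
  have p0: "p t x \<ge> 0" if "t \<ge> 1" for t x using pdef[OF that] by (simp add: sum_nonneg)
  have p1: "sum (p t) UNIV = 1" if "t \<ge> 1" for t
  proof -
    have pos: "(\<Sum>x'\<in>UNIV. exp (eta / wgt H (t-1) * (\<Sum>j=1..t-1. wgt H j * g j x'))) > 0"
      by (intro sum_pos) auto
    show ?thesis using pos by (simp add: pdef[OF that] sum_divide_distrib[symmetric])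
  qed
  define D where "D = (\<Sum>t=1..k. lrw H k t * (\<Sum>x\<in>UNIV. z x * g t x)) - (\<Sum>t=1..k. lrw H k t * (\<Sum>x\<in>UNIV. p t x * g t x))"
  have Dsum: "D = (\<Sum>t=1..k. lrw H k t * ((\<Sum>x\<in>UNIV. z x * g t x) - (\<Sum>x\<in>UNIV. p t x * g t x)))"
    unfolding D_def by (simp add: sum_subtractf right_diff_distrib)
  have triv: "D \<le> real H"
  proof -
    have "D \<le> (\<Sum>t=1..k. lrw H k t * real H)"
      unfolding Dsum
    proof (intro sum_mono mult_left_mono)
      fix t assume t: "t \<in> {1..k}"
      have "(\<Sum>x\<in>UNIV. z x * g t x) \<le> (\<Sum>x\<in>UNIV. z x * (lo t + real H))"
        using gb[of t] t z0 by (intro sum_mono mult_left_mono) auto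
      moreover have "(\<Sum>x\<in>UNIV. p t x * lo t) \<le> (\<Sum>x\<in>UNIV. p t x * g t x)"
        using gb[of t] t p0[of t] by (intro sum_mono mult_left_mono) auto
      moreover have "(\<Sum>x\<in>UNIV. z x * (lo t + real H)) = lo t + real H" by (simp add: sum_distrib_right[symmetric] z1)
      moreover have "(\<Sum>x\<in>UNIV. p t x * lo t) = lo t" using t by (simp add: sum_distrib_right[symmetric] p1)
      ultimately show "(\<Sum>x\<in>UNIV. z x * g t x) - (\<Sum>x\<in>UNIV. p t x * g t x) \<le> real H" by linarith
      show "0 \<le> lrw H k t" using t lrw_nonneg[OF H] by auto
    qed
    also have "\<dots> = real H" using lrw_sum[OF H k] by (simp add: sum_distrib_right[symmetric])
    finally show ?thesis .
  qed
  have single: "D \<le> 0" if c1: "CARD('x) = 1"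
  proof -
    obtain x0 :: 'x where U: "UNIV = {x0}" using c1 card_1_singletonE by blast
    have "sum z {x0} = 1" using z1 U by metis
    hence "z x0 = 1" by simp
    moreover have "p t x0 = 1" if "t \<ge> 1" for t
    proof -
      have "sum (p t) {x0} = 1" using p1[OF that] U by metis
      thus ?thesis by simp
    qed
    moreover have su: "sum f UNIV = f x0" for f :: "'x \<Rightarrow> real" by (subst U) simp
    ultimately have "D = 0" unfolding Dsum by (intro sum.neutral) (auto simp: su)
    thus ?thesis by simp
  qed
  have hb: "D \<le> L * lr H k / eta + eta * (real H)^2 / 8 * (1 + 2 * (real H + 1) / real k)"
  proof -
    have wpos: "\<And>t. w t > 0" unfolding w_def by (rule w'_pos[OF H])
    have wmono: "\<And>t. w t \<le> w (Suc t)" unfolding w_def by (rule w'_mono[OF H])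
    have wt: "w t = wgt H t" if "t \<ge> 1" for t using that by (simp add: w_def w'_def[OF H])
    have exps: "eta / wgt H (t-1) * (\<Sum>j=1..t-1. wgt H j * g j x) = eta / w (t-1) * (\<Sum>j=1..t-1. w j * g j x)"
      if "t \<ge> 1" for t x
    proof (cases "t = 1")
      case True thus ?thesis by simp
    next
      case False
      hence "w (t-1) = wgt H (t-1)" using that wt by simp
      moreover have "(\<Sum>j=1..t-1. wgt H j * g j x) = (\<Sum>j=1..t-1. w j * g j x)"
        by (intro sum.cong) (auto simp: wt)
      ultimately show ?thesis by simp
    qed
    have pdef': "p t x = exp (eta / w (t-1) * (\<Sum>j=1..t-1. w j * g j x))
                   / (\<Sum>x'\<in>UNIV. exp (eta / w (t-1) * (\<Sum>j=1..t-1. w j * g j x')))" if "t \<ge> 1" for t x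
      using pdef[OF that, of x] exps[OF that] by simp
    have R: "real H > 0" using H by simp
    define S where "S = (\<Sum>t=1..k. w t * (\<Sum>x\<in>UNIV. p t x * g t x))"
    define B where "B = ln (real CARD('x)) * w k / eta + eta * (real H)^2 / 8 * (\<Sum>t=1..k. (w t)^2 / w (t-1))"
    have hed: "(\<Sum>t=1..k. w t * g t x0) - S \<le> B" for x0
      unfolding S_def B_def by (rule hedge[OF wpos wmono eta R gb pdef'])
    define c where "c = lrw H k 1"
    have c: "c > 0" unfolding c_def by (rule lrw1_pos[OF H])
    have lw: "lrw H k t = c * w t" if "t \<in> {1..k}" for t
      using that lrw_wgt[OF H, of t k] wt[of t] by (simp add: c_def)
    have "D = c * ((\<Sum>x\<in>UNIV. z x * (\<Sum>t=1..k. w t * g t x)) - S)"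
    proof -
      have "(\<Sum>t=1..k. lrw H k t * (\<Sum>x\<in>UNIV. z x * g t x)) = c * (\<Sum>x\<in>UNIV. z x * (\<Sum>t=1..k. w t * g t x))"
      proof -
        have "(\<Sum>t=1..k. lrw H k t * (\<Sum>x\<in>UNIV. z x * g t x)) = (\<Sum>t=1..k. c * w t * (\<Sum>x\<in>UNIV. z x * g t x))"
          by (intro sum.cong refl) (simp add: lw)
        also have "\<dots> = c * (\<Sum>t=1..k. \<Sum>x\<in>UNIV. z x * (w t * g t x))"
          by (simp add: sum_distrib_left mult_ac)
        also have "\<dots> = c * (\<Sum>x\<in>UNIV. \<Sum>t=1..k. z x * (w t * g t x))"
          by (subst sum.swap) simp
        also have "\<dots> = c * (\<Sum>x\<in>UNIV. z x * (\<Sum>t=1..k. w t * g t x))"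
          by (simp add: sum_distrib_left)
        finally show ?thesis .
      qed
      moreover have "(\<Sum>t=1..k. lrw H k t * (\<Sum>x\<in>UNIV. p t x * g t x)) = c * S"
        unfolding S_def sum_distrib_left by (intro sum.cong refl) (simp add: lw)
      ultimately show ?thesis unfolding D_def by (simp add: right_diff_distrib)
    qed
    also have "(\<Sum>x\<in>UNIV. z x * (\<Sum>t=1..k. w t * g t x)) - S = (\<Sum>x\<in>UNIV. z x * ((\<Sum>t=1..k. w t * g t x) - S))"
      by (simp add: right_diff_distrib sum_subtractf sum_distrib_right[symmetric] z1)
    also have "\<dots> \<le> (\<Sum>x\<in>UNIV. z x * B)"
      using hed z0 by (intro sum_mono mult_left_mono) auto
    also have "\<dots> = B" by (simp add: sum_distrib_right[symmetric] z1)
    finally have "D \<le> c * B" using c by simp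
    also have "c * B = ln (real CARD('x)) * lr H k / eta + eta * (real H)^2 / 8 * (\<Sum>t=1..k. lrw H k t * rho H t)"
    proof -
      have "c * w k = lr H k" using lw[of k] k lrw_diag[OF H, of k] by simp
      moreover have "c * (\<Sum>t=1..k. (w t)^2 / w (t-1)) = (\<Sum>t=1..k. lrw H k t * rho H t)"
        unfolding sum_distrib_left
        by (intro sum.cong refl) (simp add: lw rho_def[OF H] w_def power2_eq_square)
      moreover have "c * B = (c * w k) * ln (real CARD('x)) / eta + eta * (real H)^2 / 8 * (c * (\<Sum>t=1..k. (w t)^2 / w (t-1)))"
        unfolding B_def by (simp add: algebra_simps)
      ultimately show ?thesis by simp
    qed
    also have "\<dots> \<le> L * lr H k / eta + eta * (real H)^2 / 8 * (1 + 2 * (real H + 1) / real k)"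
    proof -
      have "ln (real CARD('x)) * lr H k / eta \<le> L * lr H k / eta"
        using L lr_pos[OF H, of k] eta by (intro divide_right_mono mult_right_mono) auto
      moreover have "eta * (real H)^2 / 8 * (\<Sum>t=1..k. lrw H k t * rho H t) \<le> eta * (real H)^2 / 8 * (1 + 2 * (real H + 1) / real k)"
        using S_bound[OF H k] eta by (intro mult_left_mono) auto
      ultimately show ?thesis by linarith
    qed
    finally show ?thesis .
  qed
  have "real CARD('x) \<ge> 1" using card_ge_0_finite[of "UNIV :: 'x set"] by simp
  hence L0: "L \<ge> 0" using L ln_ge_zero by (meson order_trans)
  have "D \<le> (real H + 1) * L / (eta * real k) + eta * (real H)^2 / 2"
  proof (cases "3 * k \<ge> 2 * (H + 1)")
    case True
    have kr: "3 * real k \<ge> 2 * (real H + 1)" 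
    proof -
      have "real (2*(H+1)) \<le> real (3*k)" using True of_nat_le_iff by blast
      thus ?thesis by simp
    qed
    have a: "L * lr H k / eta \<le> (real H + 1) * L / (eta * real k)"
    proof -
      have "lr H k \<le> (real H + 1) / real k" using k by (simp add: lr_def frac_le)
      hence "L * lr H k \<le> L * ((real H + 1) / real k)" using L0 by (intro mult_left_mono)
      hence "L * lr H k / eta \<le> L * ((real H + 1) / real k) / eta" using eta by (intro divide_right_mono) auto
      also have "\<dots> = (real H + 1) * L / (eta * real k)" by (simp add: mult.commute)
      finally show ?thesis .
    qed
    have b: "1 + 2 * (real H + 1) / real k \<le> 4" using kr k by (simp add: field_simps)
    have "eta * (real H)^2 / 8 * (1 + 2 * (real H + 1) / real k) \<le> eta * (real H)^2 / 8 * 4"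
      using b eta by (intro mult_left_mono) auto
    moreover have "eta * (real H)^2 / 8 * 4 = eta * (real H)^2 / 2" by simp
    ultimately show ?thesis using hb a by linarith
  next
    case False
    show ?thesis
    proof (cases "CARD('x) = 1")
      case True
      have "0 \<le> (real H + 1) * L / (eta * real k) + eta * (real H)^2 / 2"
        using L0 eta k by (intro add_nonneg_nonneg divide_nonneg_pos mult_nonneg_nonneg) auto
      thus ?thesis using single[OF True] by linarith
    next
      case c2: False
      have "CARD('x) > 0" using card_ge_0_finite[of "UNIV :: 'x set"] by simp
      hence "CARD('x) \<ge> 2" using c2 by linarith
      hence "ln 2 \<le> ln (real CARD('x))" by simp
      hence L3: "L \<ge> 1/3" using L ln2_third by linarith
      have kr: "3 * real k < 2 * (real H + 1)" 
      proof -
        have "real (3*k) < real (2*(H+1))" using False of_nat_less_iff not_le by blast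
        thus ?thesis by simp
      qed
      have "(real H + 1) / real k \<ge> 3/2" using kr k by (simp add: field_simps)
      hence "(3/2) * (1/3) \<le> ((real H + 1) / real k) * L"
        using L3 by (intro mult_mono) auto
      hence "(real H + 1) * L / real k \<ge> 1/2" by simp
      hence "real H \<le> (real H + 1) * L / real k / eta + eta * (real H)^2 / 2"
        by (intro amgm_aux eta)
      thus ?thesis using triv by (simp add: field_simps)
    qed
  qed
  thus ?thesis unfolding D_def .
qed

lemma pay_bounds:
  fixes Q :: "'a::finite \<Rightarrow> 'b::finite \<Rightarrow> real"
  assumes x0: "\<And>a. x a \<ge> 0" and x1: "sum x UNIV = 1" and y0: "\<And>b. y b \<ge> 0" and y1: "sum y UNIV = 1"
    and Q: "\<And>a b. 0 \<le> Q a b \<and> Q a b \<le> M"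
  shows "0 \<le> pay Q x y \<and> pay Q x y \<le> M"
proof
  show "0 \<le> pay Q x y" unfolding pay_def using x0 y0 Q by (intro sum_nonneg mult_nonneg_nonneg) auto
  have "pay Q x y \<le> (\<Sum>a\<in>UNIV. \<Sum>b\<in>UNIV. x a * y b * M)"
    unfolding pay_def using x0 y0 Q by (intro sum_mono mult_left_mono) auto
  also have "\<dots> = M" by (simp add: sum_distrib_left[symmetric] sum_distrib_right[symmetric] x1 y1 mult.assoc)
  finally show "pay Q x y \<le> M" .
qed

lemma pay_mu: "pay Q x y = (\<Sum>a\<in>UNIV. x a * (\<Sum>b\<in>UNIV. y b * Q a b))"
  unfolding pay_def by (simp add: sum_distrib_left mult_ac)

lemma pay_nu: "pay Q x y = (\<Sum>b\<in>UNIV. y b * (\<Sum>a\<in>UNIV. x a * Q a b))"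
  unfolding pay_def by (subst sum.swap) (simp add: sum_distrib_left mult_ac)

lemma softmax_dist:
  fixes f :: "'x::finite \<Rightarrow> real"
  shows "(\<forall>x. 0 \<le> exp (f x) / (\<Sum>x'\<in>UNIV. exp (f x'))) \<and> (\<Sum>x\<in>UNIV. exp (f x) / (\<Sum>x'\<in>UNIV. exp (f x'))) = 1"
proof -
  have pos: "(\<Sum>x'\<in>UNIV. exp (f x')) > 0" by (intro sum_pos) auto
  thus ?thesis by (auto simp: sum_divide_distrib[symmetric])
qed

lemma uniform_dist:
  "(\<forall>x. 0 \<le> 1 / real CARD('x::finite)) \<and> (\<Sum>x\<in>(UNIV::'x set). 1 / real CARD('x)) = 1"
proof -
  have "CARD('x) > 0" using card_ge_0_finite[of "UNIV :: 'x set"] by simp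
  thus ?thesis by simp
qed

lemma uniform_softmax:
  "1 / real CARD('x::finite) = exp (0::real) / (\<Sum>x'\<in>(UNIV::'x set). exp 0)"
  by simp

theorem mainTheorem11:
  fixes H :: nat and eta :: real
    and r :: "nat \<Rightarrow> 's::finite \<Rightarrow> 'a::finite \<Rightarrow> 'b::finite \<Rightarrow> real"
    and P :: "nat \<Rightarrow> 's \<Rightarrow> 'a \<Rightarrow> 'b \<Rightarrow> 's \<Rightarrow> real"
    and Q :: "nat \<Rightarrow> nat \<Rightarrow> 's \<Rightarrow> 'a \<Rightarrow> 'b \<Rightarrow> real"
    and mu :: "nat \<Rightarrow> nat \<Rightarrow> 's \<Rightarrow> 'a \<Rightarrow> real"
    and nu :: "nat \<Rightarrow> nat \<Rightarrow> 's \<Rightarrow> 'b \<Rightarrow> real"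
  assumes H: "H \<ge> 1"
    and eta: "eta > 0"
    and r_range: "\<And>h s a b. h \<in> {1..H} \<Longrightarrow> 0 \<le> r h s a b \<and> r h s a b \<le> 1"
    and P_nonneg: "\<And>h s a b s'. h \<in> {1..H} \<Longrightarrow> 0 \<le> P h s a b s'"
    and P_sum: "\<And>h s a b. h \<in> {1..H} \<Longrightarrow> (\<Sum>s'\<in>UNIV. P h s a b s') = 1"
    and Q_last: "\<And>k s a b. Q k (H+1) s a b = 0"
    and Q_init: "\<And>h s a b. h \<in> {1..H} \<Longrightarrow> Q 0 h s a b = real H - real h + 1"
    and Q_step: "\<And>k h s a b. k \<ge> 1 \<Longrightarrow> h \<in> {1..H} \<Longrightarrow>
       Q k h s a b = (1 - lr H k) * Q (k-1) h s a b
         + lr H k * (r h s a b + (\<Sum>s'\<in>UNIV. P h s a b s' *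
              pay (Q k (h+1) s') (mu k (h+1) s') (nu k (h+1) s')))"
    and mu_init: "\<And>h s a. h \<in> {1..H} \<Longrightarrow> mu 1 h s a = 1 / real (card (UNIV :: 'a set))"
    and nu_init: "\<And>h s b. h \<in> {1..H} \<Longrightarrow> nu 1 h s b = 1 / real (card (UNIV :: 'b set))"
    and mu_step: "\<And>k h s a. k \<ge> 2 \<Longrightarrow> h \<in> {1..H} \<Longrightarrow>
       mu k h s a = exp (logit_mu H eta Q nu k h s a)
                    / (\<Sum>a'\<in>UNIV. exp (logit_mu H eta Q nu k h s a'))"
    and nu_step: "\<And>k h s b. k \<ge> 2 \<Longrightarrow> h \<in> {1..H} \<Longrightarrow>
       nu k h s b = exp (logit_nu H eta Q mu k h s b)
                    / (\<Sum>b'\<in>UNIV. exp (logit_nu H eta Q mu k h s b'))"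
  shows "\<forall>k\<ge>1. \<forall>h\<in>{1..H}.
           reg (lrw H) Q mu nu k h
             \<le> (real H + 1) * max (ln (real (card (UNIV :: 'a set)))) (ln (real (card (UNIV :: 'b set)))) / (eta * real k)
               + eta * (real H)^2 / 2
         \<and> regbar (lrw H) Q mu nu k h
             \<le> 2 * ((real H + 1) * max (ln (real (card (UNIV :: 'a set)))) (ln (real (card (UNIV :: 'b set)))) / (eta * real k)
               + eta * (real H)^2 / 2)"
proof -
  define T where "T k = (real H + 1) * max (ln (real (card (UNIV :: 'a set)))) (ln (real (card (UNIV :: 'b set)))) / (eta * real k)
               + eta * (real H)^2 / 2" for k :: nat
  have mud: "(\<forall>a. 0 \<le> mu k h s a) \<and> sum (mu k h s) UNIV = 1" if "k \<ge> 1" "h \<in> {1..H}" for k h s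
  proof (cases "k = 1")
    case True thus ?thesis using mu_init[OF that(2)] uniform_dist[where 'x='a] by simp
  next
    case False thus ?thesis using mu_step[OF _ that(2), of k] that(1) softmax_dist[of "logit_mu H eta Q nu k h s"] by simp
  qed
  have nud: "(\<forall>b. 0 \<le> nu k h s b) \<and> sum (nu k h s) UNIV = 1" if "k \<ge> 1" "h \<in> {1..H}" for k h s
  proof (cases "k = 1")
    case True thus ?thesis using nu_init[OF that(2)] uniform_dist[where 'x='b] by simp
  next
    case False thus ?thesis using nu_step[OF _ that(2), of k] that(1) softmax_dist[of "logit_nu H eta Q mu k h s"] by simp
  qed
  have Qb: "\<forall>s a b. 0 \<le> Q k h s a b \<and> Q k h s a b \<le> real H - real h + 1" if "1 \<le> h" "h \<le> H + 1" for k h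
    using that
  proof (induction k arbitrary: h)
    case 0
    show ?case
    proof (cases "h = H + 1")
      case True thus ?thesis using Q_last by simp
    next
      case False thus ?thesis using Q_init 0 by simp
    qed
  next
    case (Suc k)
    show ?case using Suc.prems
    proof (induction "H + 1 - h" arbitrary: h rule: less_induct)
      case less
      show ?case
      proof (cases "h = H + 1")
        case True thus ?thesis using Q_last by simp
      next
        case False
        hence hH: "h \<in> {1..H}" using less.prems by simp
        have IHn: "\<forall>s a b. 0 \<le> Q (Suc k) (h+1) s a b \<and> Q (Suc k) (h+1) s a b \<le> real H - real (h+1) + 1"
        proof -
          have lt: "H + 1 - (h + 1) < H + 1 - h" using hH by auto
          have "1 \<le> h + 1 \<and> h + 1 \<le> H + 1" using hH by auto
          thus ?thesis using less.hyps[OF lt] by blast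
        qed
        have pb: "0 \<le> pay (Q (Suc k) (h+1) s') (mu (Suc k) (h+1) s') (nu (Suc k) (h+1) s')
               \<and> pay (Q (Suc k) (h+1) s') (mu (Suc k) (h+1) s') (nu (Suc k) (h+1) s') \<le> real H - real h" for s'
        proof (cases "h + 1 = H + 1")
          case True thus ?thesis using Q_last by (simp add: pay_def)
        next
          case False
          hence h1: "h + 1 \<in> {1..H}" using hH by simp
          show ?thesis
            using pay_bounds[of "mu (Suc k) (h+1) s'" "nu (Suc k) (h+1) s'" "Q (Suc k) (h+1) s'" "real H - real h"]
              mud[OF _ h1, of "Suc k" s'] nud[OF _ h1, of "Suc k" s'] IHn by simp
        qed
        show ?thesis
        proof (intro allI)
          fix s a b
          define V where "V = r h s a b + (\<Sum>s'\<in>UNIV. P h s a b s' *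
              pay (Q (Suc k) (h+1) s') (mu (Suc k) (h+1) s') (nu (Suc k) (h+1) s'))"
          have Vs0: "0 \<le> (\<Sum>s'\<in>UNIV. P h s a b s' * pay (Q (Suc k) (h+1) s') (mu (Suc k) (h+1) s') (nu (Suc k) (h+1) s'))"
            using pb P_nonneg[OF hH] by (intro sum_nonneg mult_nonneg_nonneg) auto
          have "(\<Sum>s'\<in>UNIV. P h s a b s' * pay (Q (Suc k) (h+1) s') (mu (Suc k) (h+1) s') (nu (Suc k) (h+1) s'))
                \<le> (\<Sum>s'\<in>UNIV. P h s a b s' * (real H - real h))"
            using pb P_nonneg[OF hH] by (intro sum_mono mult_left_mono) auto
          also have "\<dots> = real H - real h" using P_sum[OF hH] by (simp add: sum_distrib_right[symmetric])
          finally have Vs1: "(\<Sum>s'\<in>UNIV. P h s a b s' * pay (Q (Suc k) (h+1) s') (mu (Suc k) (h+1) s') (nu (Suc k) (h+1) s')) \<le> real H - real h" .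
          have V: "0 \<le> V \<and> V \<le> real H - real h + 1" unfolding V_def using Vs0 Vs1 r_range[OF hH, of s a b] by simp
          have Qk: "0 \<le> Q k h s a b \<and> Q k h s a b \<le> real H - real h + 1" using Suc.IH[of h] less.prems by simp
          have al: "0 \<le> lr H (Suc k)" "lr H (Suc k) \<le> 1" using lr_pos[OF H] lr_le1[OF H, of "Suc k"] by (auto intro: less_imp_le)
          have eq: "Q (Suc k) h s a b = (1 - lr H (Suc k)) * Q k h s a b + lr H (Suc k) * V"
            using Q_step[of "Suc k" h s a b] hH by (simp add: V_def)
          have lo: "0 \<le> (1 - lr H (Suc k)) * Q k h s a b + lr H (Suc k) * V"
            using al Qk V by (intro add_nonneg_nonneg mult_nonneg_nonneg) auto
          have "(1 - lr H (Suc k)) * Q k h s a b + lr H (Suc k) * V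
                \<le> (1 - lr H (Suc k)) * (real H - real h + 1) + lr H (Suc k) * (real H - real h + 1)"
            using al Qk V by (intro add_mono mult_left_mono) auto
          also have "\<dots> = real H - real h + 1" by (simp add: algebra_simps)
          finally show "0 \<le> Q (Suc k) h s a b \<and> Q (Suc k) h s a b \<le> real H - real h + 1"
            using lo eq by simp
        qed
      qed
    qed
  qed
  have QH: "0 \<le> Q k h s a b \<and> Q k h s a b \<le> real H" if "h \<in> {1..H}" for k h s a b
  proof -
    have "1 \<le> h" "h \<le> H + 1" using that by auto
    hence "0 \<le> Q k h s a b \<and> Q k h s a b \<le> real H - real h + 1" using Qb[of h k] by blast
    moreover have "real H - real h + 1 \<le> real H" using \<open>1 \<le> h\<close> by simp
    ultimately show ?thesis by linarith
  qed
  have main: "regmu (lrw H) Q mu nu k h s \<le> T k \<and> regnu (lrw H) Q mu nu k h s \<le> T k"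
    if k: "k \<ge> 1" and hH: "h \<in> {1..H}" for k h s
  proof
    define g where "g t a = (\<Sum>b\<in>UNIV. nu t h s b * Q t h s a b)" for t a
    have gb: "0 \<le> g t a \<and> g t a \<le> 0 + real H" if "t \<ge> 1" for t a
      using pay_bounds[of "\<lambda>_. 1" "nu t h s" "\<lambda>_ b. Q t h s a b" "real H"]
    proof -
      have nd: "(\<forall>b. 0 \<le> nu t h s b) \<and> sum (nu t h s) UNIV = 1" by (rule nud[OF that hH])
      have "0 \<le> g t a" unfolding g_def using nd QH[OF hH] by (intro sum_nonneg mult_nonneg_nonneg) auto
      moreover have "g t a \<le> (\<Sum>b\<in>UNIV. nu t h s b * real H)" unfolding g_def
        using nd QH[OF hH] by (intro sum_mono mult_left_mono) auto
      moreover have "(\<Sum>b\<in>UNIV. nu t h s b * real H) = real H" using nd by (simp add: sum_distrib_right[symmetric])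
      ultimately show ?thesis by simp
    qed
    have pdef: "mu t h s a = exp (eta / wgt H (t-1) * (\<Sum>j=1..t-1. wgt H j * g j a))
                   / (\<Sum>x'\<in>UNIV. exp (eta / wgt H (t-1) * (\<Sum>j=1..t-1. wgt H j * g j x')))" if "t \<ge> 1" for t a
    proof (cases "t = 1")
      case True thus ?thesis using mu_init[OF hH] by simp
    next
      case False thus ?thesis using mu_step[OF _ hH, of t] that by (simp add: logit_mu_def g_def)
    qed
    have "(\<Sum>t=1..k. lrw H k t * pay (Q t h s) z (nu t h s)) \<le> T k + (\<Sum>t=1..k. lrw H k t * pay (Q t h s) (mu t h s) (nu t h s))"
      if z: "z \<in> Defs.simplex" for z
    proof -
      have "(\<Sum>t=1..k. lrw H k t * (\<Sum>x\<in>UNIV. z x * g t x)) - (\<Sum>t=1..k. lrw H k t * (\<Sum>x\<in>UNIV. mu t h s x * g t x))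
            \<le> T k"
        unfolding T_def
        by (rule player_bound[OF H eta k gb pdef z]) simp_all
      thus ?thesis by (simp add: pay_mu g_def)
    qed
    moreover have "(Defs.simplex :: ('a \<Rightarrow> real) set) \<noteq> {}"
    proof -
      have "((\<lambda>_::'a. 1 / real CARD('a)) :: 'a \<Rightarrow> real) \<in> Defs.simplex" using uniform_dist[where 'x='a] by (simp add: Defs.simplex_def)
      thus ?thesis by blast
    qed
    ultimately have "(SUP z\<in>Defs.simplex. (\<Sum>t=1..k. lrw H k t * pay (Q t h s) z (nu t h s)))
        \<le> T k + (\<Sum>t=1..k. lrw H k t * pay (Q t h s) (mu t h s) (nu t h s))"
      by (intro cSUP_least) auto
    thus "regmu (lrw H) Q mu nu k h s \<le> T k" unfolding regmu_def by simp
  next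
    define g where "g t b = - (\<Sum>a\<in>UNIV. mu t h s a * Q t h s a b)" for t b
    have gb: "- real H \<le> g t b \<and> g t b \<le> - real H + real H" if "t \<ge> 1" for t b
    proof -
      have nd: "(\<forall>a. 0 \<le> mu t h s a) \<and> sum (mu t h s) UNIV = 1" by (rule mud[OF that hH])
      have "0 \<le> (\<Sum>a\<in>UNIV. mu t h s a * Q t h s a b)" using nd QH[OF hH] by (intro sum_nonneg mult_nonneg_nonneg) auto
      moreover have "(\<Sum>a\<in>UNIV. mu t h s a * Q t h s a b) \<le> (\<Sum>a\<in>UNIV. mu t h s a * real H)"
        using nd QH[OF hH] by (intro sum_mono mult_left_mono) auto
      moreover have "(\<Sum>a\<in>UNIV. mu t h s a * real H) = real H" using nd by (simp add: sum_distrib_right[symmetric])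
      ultimately show ?thesis unfolding g_def by simp
    qed
    have pdef: "nu t h s b = exp (eta / wgt H (t-1) * (\<Sum>j=1..t-1. wgt H j * g j b))
                   / (\<Sum>x'\<in>UNIV. exp (eta / wgt H (t-1) * (\<Sum>j=1..t-1. wgt H j * g j x')))" if "t \<ge> 1" for t b
    proof (cases "t = 1")
      case True thus ?thesis using nu_init[OF hH] by simp
    next
      case False
      have e: "logit_nu H eta Q mu t h s b' = eta / wgt H (t-1) * (\<Sum>j=1..t-1. wgt H j * g j b')" for b'
        unfolding logit_nu_def g_def by (simp add: sum_negf)
      show ?thesis using nu_step[OF _ hH, of t] that False by (simp only: e)
    qed
    have "(\<Sum>t=1..k. lrw H k t * pay (Q t h s) (mu t h s) (nu t h s)) - T k \<le> (\<Sum>t=1..k. lrw H k t * pay (Q t h s) (mu t h s) z)"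
      if z: "z \<in> Defs.simplex" for z
    proof -
      have "(\<Sum>t=1..k. lrw H k t * (\<Sum>x\<in>UNIV. z x * g t x)) - (\<Sum>t=1..k. lrw H k t * (\<Sum>x\<in>UNIV. nu t h s x * g t x))
            \<le> T k"
        unfolding T_def
        by (rule player_bound[OF H eta k gb pdef z]) simp_all
      moreover have "(\<Sum>x\<in>UNIV. y x * g t x) = - pay (Q t h s) (mu t h s) y" for y t
        by (simp add: pay_nu g_def sum_negf)
      ultimately show ?thesis by (simp add: sum_negf)
    qed
    moreover have "(Defs.simplex :: ('b \<Rightarrow> real) set) \<noteq> {}"
    proof -
      have "((\<lambda>_::'b. 1 / real CARD('b)) :: 'b \<Rightarrow> real) \<in> Defs.simplex" using uniform_dist[where 'x='b] by (simp add: Defs.simplex_def)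
      thus ?thesis by blast
    qed
    ultimately have "(\<Sum>t=1..k. lrw H k t * pay (Q t h s) (mu t h s) (nu t h s)) - T k \<le>
        (INF z\<in>Defs.simplex. (\<Sum>t=1..k. lrw H k t * pay (Q t h s) (mu t h s) z))"
      by (intro cINF_greatest) auto
    thus "regnu (lrw H) Q mu nu k h s \<le> T k" unfolding regnu_def by simp
  qed
  show ?thesis
  proof (intro allI impI ballI conjI)
    fix k h :: nat assume k: "k \<ge> 1" and hH: "h \<in> {1..H}"
    have "reg (lrw H) Q mu nu k h \<le> T k"
      unfolding reg_def using main[OF k hH] by (subst Max_le_iff) auto
    thus "reg (lrw H) Q mu nu k h \<le> (real H + 1) * max (ln (real (card (UNIV :: 'a set)))) (ln (real (card (UNIV :: 'b set)))) / (eta * real k)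
               + eta * (real H)^2 / 2" by (simp add: T_def)
    have "regbar (lrw H) Q mu nu k h \<le> 2 * T k"
      unfolding regbar_def using main[OF k hH] by (subst Max_le_iff) (auto intro: add_mono[of _ "T k" _ "T k", simplified])
    thus "regbar (lrw H) Q mu nu k h \<le> 2 * ((real H + 1) * max (ln (real (card (UNIV :: 'a set)))) (ln (real (card (UNIV :: 'b set)))) / (eta * real k)
               + eta * (real H)^2 / 2)" by (simp add: T_def)
  qed
qed

end
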